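(* Let $r, J, L \ge 1$ be integers. Let $\mathbf{H}(X) = [h_{j,l}(X)]_{j \in [J], l \in [L]}$ be a $J \times L$ matrix whose entries are elements of $\mathbb{F}_2[X]/\langle X^r - 1\rangle$, each of which is either $0$, a monomial $X^{a}$, or a binomial $X^{a} + X^{b}$ with $a \not\equiv b \pmod r$. Let $H$ be the associated $Jr \times Lr$ binary parity-check matrix, and assume $H$ has constant column weight and constant row weight. For each $j,l$ let $E_{j,l} \subseteq \mathbb{Z}_r$ be the set of exponents occurring in $h_{j,l}(X)$. For $i, j \in [J]$ let $\mathbf{d}_{ij}$ be the multiset $\{(e - e') \bmod r : l \in [L],\ e \in E_{i,l},\ e' \in E_{j,l}\}$, where, when $i = j$, the pairs with $e = e'$ are excluded. Then the code $C(H)$ has girth $g \ge 6$ if and only if $\mathbf{d}_{ij}$ is multiplicity free for all $i, j \in [J]$.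
   Context: The binary matrix $H$ associated with $\mathbf{H}(X)$ is obtained by replacing each entry $h_{j,l}(X) = \sum_{s=0}^{r-1} c_s X^s$ by the $r\times r$ binary circulant matrix with first row $(c_0,\ldots,c_{r-1})$ (each subsequent row being the cyclic right shift by one of the previous row). $C(H)$ is the null space of $H$. A cycle of length $2s$ in $H$ is an ordered list of $2s$ positions of $H$ such that all these entries equal $1$, consecutive positions alternately share a row (with different columns) or share a column (with different rows), and all $2s$ positions are distinct except that the first and last coincide; the girth of the code is the length of a shortest cycle (infinite if there is none). A multiset is multiplicity free if no element occurs more than once. $[J]=\{1,\ldots,J\}$. *)

theory Defs
  imports Main "HOL-Library.Multiset" "HOL-Library.Extended_Nat"
begin

text \<open>An entry h_{j,l}(X) of the polynomial matrix over F_2[X]/(X^r - 1) is represented by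
  its set of exponents E j l, a subset of {0..<r} (coefficient c_s = 1 iff s in E j l).
  Block indices j, l are 0-based: j < J, l < L.\<close>

text \<open>Binary matrix H (Jr x Lr, 0-based row x and column y): the block (x div r, y div r)
  is the circulant with first row c, so entry (a,b) of the block equals c_{(b - a) mod r}.\<close>
definition Hmat :: "nat \<Rightarrow> (nat \<Rightarrow> nat \<Rightarrow> nat set) \<Rightarrow> nat \<Rightarrow> nat \<Rightarrow> bool" where
  "Hmat r E x y = ((y mod r + r - x mod r) mod r \<in> E (x div r) (y div r))"

definition same_row :: "nat \<times> nat \<Rightarrow> nat \<times> nat \<Rightarrow> bool" where
  "same_row p q = (fst p = fst q \<and> snd p \<noteq> snd q)"

definition same_col :: "nat \<times> nat \<Rightarrow> nat \<times> nat \<Rightarrow> bool" where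
  "same_col p q = (snd p = snd q \<and> fst p \<noteq> fst q)"

definition is_cycle :: "nat \<Rightarrow> nat \<Rightarrow> (nat \<Rightarrow> nat \<Rightarrow> bool) \<Rightarrow> nat \<Rightarrow> (nat \<times> nat) list \<Rightarrow> bool" where
  "is_cycle m n M s ps =
     (s \<ge> 1 \<and> length ps = 2 * s + 1 \<and> hd ps = last ps \<and> distinct (butlast ps) \<and>
      (\<forall>p \<in> set ps. fst p < m \<and> snd p < n \<and> M (fst p) (snd p)) \<and>
      ((\<forall>k < 2 * s. if even k then same_row (ps ! k) (ps ! Suc k) else same_col (ps ! k) (ps ! Suc k)) \<or>
       (\<forall>k < 2 * s. if even k then same_col (ps ! k) (ps ! Suc k) else same_row (ps ! k) (ps ! Suc k))))"

text \<open>Girth: length of a shortest cycle, \<infinity> if there is none (Inf {} = \<infinity> in enat).\<close>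
definition girth :: "nat \<Rightarrow> nat \<Rightarrow> (nat \<Rightarrow> nat \<Rightarrow> bool) \<Rightarrow> enat" where
  "girth m n M = Inf {enat (2 * s) | s. \<exists>ps. is_cycle m n M s ps}"

definition const_col_weight :: "nat \<Rightarrow> nat \<Rightarrow> (nat \<Rightarrow> nat \<Rightarrow> bool) \<Rightarrow> bool" where
  "const_col_weight m n M = (\<exists>w. \<forall>y < n. card {x. x < m \<and> M x y} = w)"

definition const_row_weight :: "nat \<Rightarrow> nat \<Rightarrow> (nat \<Rightarrow> nat \<Rightarrow> bool) \<Rightarrow> bool" where
  "const_row_weight m n M = (\<exists>w. \<forall>x < m. card {y. y < n \<and> M x y} = w)"

definition dmset :: "nat \<Rightarrow> nat \<Rightarrow> (nat \<Rightarrow> nat \<Rightarrow> nat set) \<Rightarrow> nat \<Rightarrow> nat \<Rightarrow> nat multiset" where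
  "dmset r L E i j = image_mset (\<lambda>(l, e, e'). (e + r - e') mod r)
     (mset_set {(l, e, e'). l < L \<and> e \<in> E i l \<and> e' \<in> E j l \<and> (i = j \<longrightarrow> e \<noteq> e')})"

definition multiplicity_free :: "'a multiset \<Rightarrow> bool" where
  "multiplicity_free M = (\<forall>x. count M x \<le> 1)"

end

theory Submission
  imports Defs
begin


lemma canc1: "(u - c) mod (m::int) = (v - c) mod m \<Longrightarrow> u mod m = v mod m"
proof -
  assume h: "(u - c) mod (m::int) = (v - c) mod m"
  have "u mod m = ((u - c) + c) mod m" by simp
  also have "\<dots> = ((u - c) mod m + c) mod m" by (simp only: mod_add_left_eq)
  also have "\<dots> = ((v - c) mod m + c) mod m" by (simp only: h)
  also have "\<dots> = ((v - c) + c) mod m" by (simp only: mod_add_left_eq)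
  also have "\<dots> = v mod m" by simp
  finally show ?thesis .
qed
lemma canc2: "(c - u) mod (m::int) = (c - v) mod m \<Longrightarrow> u mod m = v mod m"
proof -
  assume h: "(c - u) mod (m::int) = (c - v) mod m"
  have "u mod m = (c - (c - u)) mod m" by simp
  also have "\<dots> = (c - (c - u) mod m) mod m" by (simp only: mod_diff_right_eq)
  also have "\<dots> = (c - (c - v) mod m) mod m" by (simp only: h)
  also have "\<dots> = (c - (c - v)) mod m" by (simp only: mod_diff_right_eq)
  also have "\<dots> = v mod m" by simp
  finally show ?thesis .
qed
lemma small_eq: "(a::nat) < r \<Longrightarrow> b < r \<Longrightarrow> int a mod int r = int b mod int r \<Longrightarrow> a = b"
  by (metis mod_less of_nat_eq_iff of_nat_mod)
lemma addm: "(a + m - b) mod (m::int) = (a - b) mod m"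
proof -
  have e: "a + m - b = (a - b) + m" by simp
  show ?thesis unfolding e by (rule mod_add_self2)
qed
lemma Dint: "(r::nat) \<ge> 1 \<Longrightarrow> int ((y mod r + r - x mod r) mod r) = (int y - int x) mod int r"
proof -
  assume "r \<ge> 1"
  then have "x mod r \<le> r" by (simp add: less_imp_le)
  then have "int ((y mod r + r - x mod r) mod r) = (int (y mod r) + int r - int (x mod r)) mod int r"
    by (simp add: of_nat_mod of_nat_diff)
  also have "\<dots> = (int (y mod r) - int (x mod r)) mod int r" by (rule addm)
  also have "\<dots> = (int y - int x) mod int r" by (simp add: of_nat_mod mod_diff_eq)
  finally show ?thesis .
qed
lemma fint: "(q::nat) < r \<Longrightarrow> int ((p + r - q) mod r) = (int p - int q) mod int r"
proof -
  assume "q < r"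
  then have "int ((p + r - q) mod r) = (int p + int r - int q) mod int r"
    by (simp add: of_nat_mod of_nat_diff)
  also have "\<dots> = (int p - int q) mod int r" by (rule addm)
  finally show ?thesis .
qed

definition rect :: "nat \<Rightarrow> nat \<Rightarrow> (nat \<Rightarrow> nat \<Rightarrow> bool) \<Rightarrow> bool" where
 "rect m n M = (\<exists>x x' y y'. x < m \<and> x' < m \<and> y < n \<and> y' < n \<and> x \<noteq> x' \<and> y \<noteq> y' \<and>
     M x y \<and> M x y' \<and> M x' y \<and> M x' y')"

definition Sset :: "nat \<Rightarrow> (nat \<Rightarrow> nat \<Rightarrow> nat set) \<Rightarrow> nat \<Rightarrow> nat \<Rightarrow> (nat \<times> nat \<times> nat) set" where
  "Sset L E i j = {(l, e, e'). l < L \<and> e \<in> E i l \<and> e' \<in> E j l \<and> (i = j \<longrightarrow> e \<noteq> e')}"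

definition fD :: "nat \<Rightarrow> nat \<times> nat \<times> nat \<Rightarrow> nat" where
  "fD r = (\<lambda>(l, e, e'). (e + r - e') mod r)"

lemma int_inj_mod: "int a = int b \<Longrightarrow> a = b" by simp

lemma rect_fwd:
  assumes r1: "r \<ge> 1" and EE: "\<forall>j<J. \<forall>l<L. E j l \<subseteq> {..<r}"
    and R: "rect (J*r) (L*r) (Hmat r E)"
  shows "\<exists>i<J. \<exists>j<J. \<not> inj_on (fD r) (Sset L E i j)"
proof -
  obtain x x' y y' where r: "x < J*r" "x' < J*r" "y < L*r" "y' < L*r" "x \<noteq> x'" "y \<noteq> y'"
     "Hmat r E x y" "Hmat r E x y'" "Hmat r E x' y" "Hmat r E x' y'" using R unfolding rect_def by blast
  define De where "De = (\<lambda>y x. (y mod r + r - x mod r) mod r)"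
  have DI: "int (De b a) = (int b - int a) mod int r" for a b unfolding De_def using Dint r1 by blast
  have Dl: "De b a < r" for a b unfolding De_def using r1 by simp
  define i where "i = x div r"
  define j where "j = x' div r"
  define l where "l = y div r"
  define l' where "l' = y' div r"
  have ij: "i < J" "j < J" "l < L" "l' < L" unfolding i_def j_def l_def l'_def
    using r by (simp_all add: less_mult_imp_div_less)
  have m: "De y x \<in> E i l" "De y' x \<in> E i l'" "De y x' \<in> E j l" "De y' x' \<in> E j l'"
    using r unfolding Hmat_def De_def i_def j_def l_def l'_def by simp_all
  define t1 where "t1 = (l, De y x, De y x')"
  define t2 where "t2 = (l', De y' x, De y' x')"
  have neq: "De y x \<noteq> De y x'" if "i = j" for y
  proof
    assume "De y x = De y x'"
    then have "(int y - int x) mod int r = (int y - int x') mod int r" using DI by metis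
    then have "int x mod int r = int x' mod int r" by (rule canc2)
    then have "x mod r = x' mod r" by (metis of_nat_mod int_inj_mod)
    moreover have "x div r = x' div r" using that i_def j_def by simp
    ultimately have "x = x'" by (metis div_mult_mod_eq)
    then show False using r by simp
  qed
  have t1S: "t1 \<in> Sset L E i j" unfolding t1_def Sset_def using ij m neq by simp
  have t2S: "t2 \<in> Sset L E i j" unfolding t2_def Sset_def using ij m neq by simp
  have fv: "int (fD r (l0, De b x, De b x')) = (int x' - int x) mod int r" for l0 b
  proof -
    have "int (fD r (l0, De b x, De b x')) = (int (De b x) - int (De b x')) mod int r"
      unfolding fD_def using fint Dl by simp
    also have "\<dots> = ((int b - int x) mod int r - (int b - int x') mod int r) mod int r" using DI by simp
    also have "\<dots> = ((int b - int x) - (int b - int x')) mod int r" by (simp only: mod_diff_eq)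
    also have "\<dots> = (int x' - int x) mod int r" by simp
    finally show ?thesis .
  qed
  have feq: "fD r t1 = fD r t2" unfolding t1_def t2_def using fv by (metis int_inj_mod)
  have tneq: "t1 \<noteq> t2"
  proof
    assume "t1 = t2"
    then have "l = l'" "De y x = De y' x" unfolding t1_def t2_def by simp_all
    from this(2) have "(int y - int x) mod int r = (int y' - int x) mod int r" using DI by metis
    then have "int y mod int r = int y' mod int r" by (rule canc1)
    then have "y mod r = y' mod r" by (metis of_nat_mod int_inj_mod)
    with \<open>l = l'\<close> have "y = y'" unfolding l_def l'_def by (metis div_mult_mod_eq)
    then show False using r by simp
  qed
  have "\<not> inj_on (fD r) (Sset L E i j)" using t1S t2S feq tneq unfolding inj_on_def by blast
  then show ?thesis using ij by blast
qed

lemma rect_bwd: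
  assumes r1: "r \<ge> 1" and EE: "\<forall>j<J. \<forall>l<L. E j l \<subseteq> {..<r}"
    and i: "i < J" and j: "j < J" and NI: "\<not> inj_on (fD r) (Sset L E i j)"
  shows "rect (J*r) (L*r) (Hmat r E)"
proof -
  obtain t1 t2 where t: "t1 \<in> Sset L E i j" "t2 \<in> Sset L E i j" "fD r t1 = fD r t2" "t1 \<noteq> t2"
    using NI unfolding inj_on_def by blast
  obtain l e1 e3 where t1: "t1 = (l, e1, e3)" by (cases t1) auto
  obtain l' e2 e4 where t2: "t2 = (l', e2, e4)" by (cases t2) auto
  have mem: "l < L" "e1 \<in> E i l" "e3 \<in> E j l" "i = j \<longrightarrow> e1 \<noteq> e3"
    "l' < L" "e2 \<in> E i l'" "e4 \<in> E j l'" "i = j \<longrightarrow> e2 \<noteq> e4"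
    using t(1,2) unfolding t1 t2 Sset_def by auto
  have lt: "e1 < r" "e2 < r" "e3 < r" "e4 < r" using mem EE i j by auto
  define d where "d = (e1 + r - e3) mod r"
  have dl: "d < r" unfolding d_def using r1 by simp
  have d1: "int d = (int e1 - int e3) mod int r" unfolding d_def using fint lt by blast
  have d2: "int d = (int e2 - int e4) mod int r"
  proof -
    have "d = (e2 + r - e4) mod r" using t(3) unfolding d_def t1 t2 fD_def by simp
    then show ?thesis using fint lt by simp
  qed
  have bk: "(c + r - d) mod r = e" if "int d = (int c - int e) mod int r" "e < r" for c e
  proof -
    have "int ((c + r - d) mod r) = (int c - int d) mod int r" using fint dl by blast
    also have "\<dots> = (int c - (int c - int e) mod int r) mod int r" using that by simp
    also have "\<dots> = (int c - (int c - int e)) mod int r" by (simp only: mod_diff_right_eq)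
    also have "\<dots> = int e" using that by simp
    finally show ?thesis by (metis int_inj_mod)
  qed
  define x where "x = i * r"
  define x' where "x' = j * r + d"
  define y where "y = l * r + e1"
  define y' where "y' = l' * r + e2"
  have r0: "r > 0" using r1 by simp
  have dm: "x div r = i" "x mod r = 0" "x' div r = j" "x' mod r = d"
     "y div r = l" "y mod r = e1" "y' div r = l'" "y' mod r = e2"
    unfolding x_def x'_def y_def y'_def using r0 dl lt by simp_all
  have bnd: "a * r + b < K * r" if "a < K" "b < r" for a b K :: nat
  proof -
    have "a * r + b < (a + 1) * r" using that by simp
    also have "\<dots> \<le> K * r" using that by (intro mult_right_mono) auto
    finally show ?thesis .
  qed
  have b: "x < J*r" "x' < J*r" "y < L*r" "y' < L*r"
    unfolding x_def x'_def y_def y'_def using bnd[of i J 0] bnd dl lt mem i j r0 by auto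
  have h: "Hmat r E x y" "Hmat r E x y'" "Hmat r E x' y" "Hmat r E x' y'"
    unfolding Hmat_def dm using mem lt bk[OF d1 lt(3)] bk[OF d2 lt(4)] by simp_all
  have xne: "x \<noteq> x'"
  proof
    assume "x = x'"
    then have "i = j" "d = 0" using dm by metis+
    then have "(int e1 - int e3) mod int r = (int e3 - int e3) mod int r" using d1 by simp
    then have "int e1 mod int r = int e3 mod int r" by (rule canc1)
    then have "e1 = e3" using small_eq lt by blast
    then show False using mem \<open>i = j\<close> by simp
  qed
  have yne: "y \<noteq> y'"
  proof
    assume "y = y'"
    then have "l = l'" "e1 = e2" using dm by metis+
    then have "(int e1 - int e3) mod int r = (int e1 - int e4) mod int r" using d1 d2 by simp
    then have "int e3 mod int r = int e4 mod int r" by (rule canc2)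
    then have "e3 = e4" using small_eq lt by blast
    then show False using t(4) t1 t2 \<open>l = l'\<close> \<open>e1 = e2\<close> by simp
  qed
  show ?thesis unfolding rect_def using b h xne yne by blast
qed


lemma all4: "(\<forall>k<(4::nat). P k) = (P 0 \<and> P 1 \<and> P 2 \<and> P 3)"
  by (auto simp: eval_nat_numeral less_Suc_eq)
lemma all2: "(\<forall>k<(2::nat). P k) = (P 0 \<and> P 1)"
  by (auto simp: eval_nat_numeral less_Suc_eq)

lemma len5: "length xs = 5 \<Longrightarrow> \<exists>a b c d e. xs = [a,b,c,d,e]"
  by (auto simp: eval_nat_numeral length_Suc_conv)
lemma len3: "length xs = 3 \<Longrightarrow> \<exists>a b c. xs = [a,b,c]"
  by (auto simp: eval_nat_numeral length_Suc_conv)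

lemma no_cyc1: "\<not> is_cycle m n M 1 ps"
proof
  assume c: "is_cycle m n M 1 ps"
  have "length ps = 3" using c unfolding is_cycle_def by simp
  then obtain a b d where ps: "ps = [a,b,d]" using len3 by blast
  have da: "d = a" using c ps unfolding is_cycle_def by simp
  from c have alt: "(\<forall>k < 2. if even k then same_row (ps ! k) (ps ! Suc k) else same_col (ps ! k) (ps ! Suc k)) \<or>
       (\<forall>k < 2. if even k then same_col (ps ! k) (ps ! Suc k) else same_row (ps ! k) (ps ! Suc k))"
    unfolding is_cycle_def by simp
  then show False
  proof
    assume h: "\<forall>k < 2. if even k then same_row (ps ! k) (ps ! Suc k) else same_col (ps ! k) (ps ! Suc k)"
    have "same_row a b" using h[rule_format, of 0] ps by simp
    moreover have "same_col b a" using h[rule_format, of 1] ps da by simp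
    ultimately show False unfolding same_row_def same_col_def by simp
  next
    assume h: "\<forall>k < 2. if even k then same_col (ps ! k) (ps ! Suc k) else same_row (ps ! k) (ps ! Suc k)"
    have "same_col a b" using h[rule_format, of 0] ps by simp
    moreover have "same_row b a" using h[rule_format, of 1] ps da by simp
    ultimately show False unfolding same_row_def same_col_def by simp
  qed
qed

lemma cyc2: "(\<exists>ps. is_cycle m n M 2 ps) \<longleftrightarrow> rect m n M"
proof
  assume "\<exists>ps. is_cycle m n M 2 ps"
  then obtain ps where c: "is_cycle m n M 2 ps" by blast
  have "length ps = 5" using c unfolding is_cycle_def by simp
  then obtain p0 p1 p2 p3 p4 where ps: "ps = [p0,p1,p2,p3,p4]" using len5 by blast
  have p4: "p4 = p0" using c ps unfolding is_cycle_def by simp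
  have ones: "\<forall>p \<in> set ps. fst p < m \<and> snd p < n \<and> M (fst p) (snd p)" using c unfolding is_cycle_def by blast
  obtain a1 a2 where A: "p0 = (a1,a2)" by force
  obtain b1 b2 where B: "p1 = (b1,b2)" by force
  obtain d1 d2 where D: "p2 = (d1,d2)" by force
  obtain e1 e2 where E: "p3 = (e1,e2)" by force
  have o: "a1 < m" "a2 < n" "M a1 a2" "b1 < m" "b2 < n" "M b1 b2" "d1 < m" "d2 < n" "M d1 d2"
    "e1 < m" "e2 < n" "M e1 e2" using ones ps A B D E by auto
  from c have alt: "(\<forall>k < 4. if even k then same_row (ps ! k) (ps ! Suc k) else same_col (ps ! k) (ps ! Suc k)) \<or>
       (\<forall>k < 4. if even k then same_col (ps ! k) (ps ! Suc k) else same_row (ps ! k) (ps ! Suc k))"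
    unfolding is_cycle_def by simp
  then show "rect m n M"
  proof
    assume h: "\<forall>k < 4. if even k then same_row (ps ! k) (ps ! Suc k) else same_col (ps ! k) (ps ! Suc k)"
    have "same_row p0 p1" using h[rule_format, of 0] ps by simp
    moreover have "same_col p1 p2" using h[rule_format, of 1] ps by simp
    moreover have "same_row p2 p3" using h[rule_format, of 2] ps by simp
    moreover have "same_col p3 p0" using h[rule_format, of 3] ps p4 by simp
    ultimately show ?thesis unfolding same_row_def same_col_def rect_def using o A B D E
      by (intro exI[of _ a1] exI[of _ d1] exI[of _ a2] exI[of _ b2]) auto
  next
    assume h: "\<forall>k < 4. if even k then same_col (ps ! k) (ps ! Suc k) else same_row (ps ! k) (ps ! Suc k)"
    have "same_col p0 p1" using h[rule_format, of 0] ps by simp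
    moreover have "same_row p1 p2" using h[rule_format, of 1] ps by simp
    moreover have "same_col p2 p3" using h[rule_format, of 2] ps by simp
    moreover have "same_row p3 p0" using h[rule_format, of 3] ps p4 by simp
    ultimately show ?thesis unfolding same_row_def same_col_def rect_def using o A B D E
      by (intro exI[of _ a1] exI[of _ b1] exI[of _ a2] exI[of _ d2]) auto
  qed
next
  assume "rect m n M"
  then obtain x x' y y' where r: "x < m" "x' < m" "y < n" "y' < n" "x \<noteq> x'" "y \<noteq> y'"
     "M x y" "M x y'" "M x' y" "M x' y'" unfolding rect_def by blast
  let ?ps = "[(x,y),(x,y'),(x',y'),(x',y),(x,y)]"
  have alt: "\<forall>k < 2*2. if even k then same_row (?ps ! k) (?ps ! Suc k) else same_col (?ps ! k) (?ps ! Suc k)"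
    unfolding mult_2 numeral_Bit0[symmetric] all4 using r by (simp add: same_row_def same_col_def)
  have "is_cycle m n M 2 ?ps"
    unfolding is_cycle_def apply (intro conjI disjI1) prefer 6 apply (rule alt) using r by simp_all
  then show "\<exists>ps. is_cycle m n M 2 ps" by blast
qed

lemma girth6: "girth m n M \<ge> 6 \<longleftrightarrow> \<not> rect m n M"
proof -
  have "girth m n M \<ge> 6 \<longleftrightarrow> (\<forall>s. (\<exists>ps. is_cycle m n M s ps) \<longrightarrow> 6 \<le> 2*s)"
    unfolding girth_def le_Inf_iff
  proof (intro iffI allI impI)
    fix s assume h: "\<forall>x\<in>{enat (2 * s) |s. \<exists>ps. is_cycle m n M s ps}. 6 \<le> x" and "\<exists>ps. is_cycle m n M s ps"
    then have "6 \<le> enat (2*s)" by blast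
    then show "6 \<le> 2*s" by (simp add: numeral_eq_enat)
  next
    assume h: "\<forall>s. (\<exists>ps. is_cycle m n M s ps) \<longrightarrow> 6 \<le> 2*s"
    show "\<forall>x\<in>{enat (2 * s) |s. \<exists>ps. is_cycle m n M s ps}. 6 \<le> x"
      using h by (auto simp: numeral_eq_enat)
  qed
  also have "\<dots> \<longleftrightarrow> \<not> (\<exists>ps. is_cycle m n M 2 ps)"
  proof
    assume "\<forall>s. (\<exists>ps. is_cycle m n M s ps) \<longrightarrow> 6 \<le> 2*s" then show "\<not> (\<exists>ps. is_cycle m n M 2 ps)" by force
  next
    assume h: "\<not> (\<exists>ps. is_cycle m n M 2 ps)"
    show "\<forall>s. (\<exists>ps. is_cycle m n M s ps) \<longrightarrow> 6 \<le> 2*s"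
    proof (intro allI impI)
      fix s assume "\<exists>ps. is_cycle m n M s ps"
      then obtain ps where c: "is_cycle m n M s ps" by blast
      then have "s \<ge> 1" unfolding is_cycle_def by simp
      moreover have "s \<noteq> 1" using c no_cyc1 by blast
      moreover have "s \<noteq> 2" using c h by blast
      ultimately show "6 \<le> 2*s" by linarith
    qed
  qed
  finally show ?thesis using cyc2 by blast
qed

lemma count_free: "finite S \<Longrightarrow> multiplicity_free (image_mset f (mset_set S)) \<longleftrightarrow> inj_on f S"
proof -
  assume fin: "finite S"
  have cnt: "count (image_mset f (mset_set S)) v = card (f -` {v} \<inter> S)" for v
    using fin by (simp add: count_image_mset)
  show ?thesis unfolding multiplicity_free_def cnt
  proof
    assume h: "\<forall>v. card (f -` {v} \<inter> S) \<le> 1"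
    show "inj_on f S"
    proof (rule inj_onI)
      fix a b assume "a \<in> S" "b \<in> S" "f a = f b"
      then have "{a,b} \<subseteq> f -` {f a} \<inter> S" by auto
      moreover have "card (f -` {f a} \<inter> S) \<le> 1" using h by blast
      ultimately have "card {a,b} \<le> 1" using fin
        by (meson card_mono finite_Int le_trans)
      then show "a = b" by (cases "a = b") auto
    qed
  next
    assume "inj_on f S"
    show "\<forall>v. card (f -` {v} \<inter> S) \<le> 1"
    proof
      fix v
      have "\<forall>a\<in>f -` {v} \<inter> S. \<forall>b\<in>f -` {v} \<inter> S. a = b" using \<open>inj_on f S\<close> unfolding inj_on_def by auto
      then have "card (f -` {v} \<inter> S) \<le> Suc 0" using fin by (subst card_le_Suc0_iff_eq) auto
      then show "card (f -` {v} \<inter> S) \<le> 1" by simp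
    qed
  qed
qed


theorem theorem11:
  fixes r J L :: nat and E :: "nat \<Rightarrow> nat \<Rightarrow> nat set"
  assumes "r \<ge> 1" and "J \<ge> 1" and "L \<ge> 1"
    and "\<forall>j < J. \<forall>l < L. E j l \<subseteq> {..<r} \<and> card (E j l) \<le> 2"
    and "const_col_weight (J * r) (L * r) (Hmat r E)"
    and "const_row_weight (J * r) (L * r) (Hmat r E)"
  shows "girth (J * r) (L * r) (Hmat r E) \<ge> 6 \<longleftrightarrow>
         (\<forall>i < J. \<forall>j < J. multiplicity_free (dmset r L E i j))"
proof -
  have EE: "\<forall>j<J. \<forall>l<L. E j l \<subseteq> {..<r}" using assms(4) by blast
  have fin: "finite (Sset L E i j)" if "i < J" "j < J" for i j
  proof (rule finite_subset)
    show "Sset L E i j \<subseteq> {..<L} \<times> {..<r} \<times> {..<r}" using EE that unfolding Sset_def by auto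
  qed simp
  have dm: "dmset r L E i j = image_mset (fD r) (mset_set (Sset L E i j))" for i j
    unfolding dmset_def fD_def Sset_def by simp
  have "girth (J * r) (L * r) (Hmat r E) \<ge> 6 \<longleftrightarrow> \<not> rect (J*r) (L*r) (Hmat r E)" by (rule girth6)
  also have "\<dots> \<longleftrightarrow> (\<forall>i < J. \<forall>j < J. inj_on (fD r) (Sset L E i j))"
    using rect_fwd[OF assms(1) EE] rect_bwd[OF assms(1) EE] by blast
  also have "\<dots> \<longleftrightarrow> (\<forall>i < J. \<forall>j < J. multiplicity_free (dmset r L E i j))"
    using count_free fin unfolding dm by blast
  finally show ?thesis .
qed

end
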